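(* Let $G$ be a connected graph and let $v \in V(G)$. Then (1) $\left\lceil \frac{\tau(G)+1}{2} \right\rceil \le \tau(v) \le \tau(G)$; (2) there are at most $\left\lceil \frac{\tau(G)}{2} \right\rceil$ distinct terms in the detour sequence of $G$.
   Context: All graphs are finite and simple. The order of a path is its number of vertices. For a vertex $v$ of a graph $G$, the detour order $\tau(v)=\tau_G(v)$ is the order of a longest path in $G$ having $v$ as an endvertex. The detour order $\tau(G)$ of $G$ is the maximum of $\tau(v)$ over $v\in V(G)$, i.e. the order of a longest path in $G$. The detour sequence of $G$ is the nondecreasing sequence formed by the values $\tau(v)$, $v \in V(G)$ (one term per vertex). *)

theory Defs
  imports Complex_Main "HOL-Library.Multiset"
begin

definition simple_graph :: "'a set \<Rightarrow> ('a \<Rightarrow> 'a \<Rightarrow> bool) \<Rightarrow> bool" where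
  "simple_graph V E \<longleftrightarrow> finite V \<and> (\<forall>u w. E u w \<longrightarrow> u \<in> V \<and> w \<in> V)
     \<and> (\<forall>u w. E u w \<longrightarrow> E w u) \<and> (\<forall>u. \<not> E u u)"

text \<open>A path is a nonempty list of distinct vertices, consecutive ones adjacent.
  Its order is its length (number of vertices).\<close>
definition is_path :: "'a set \<Rightarrow> ('a \<Rightarrow> 'a \<Rightarrow> bool) \<Rightarrow> 'a list \<Rightarrow> bool" where
  "is_path V E p \<longleftrightarrow> p \<noteq> [] \<and> distinct p \<and> set p \<subseteq> V
     \<and> (\<forall>i. Suc i < length p \<longrightarrow> E (p ! i) (p ! Suc i))"

definition connected_graph :: "'a set \<Rightarrow> ('a \<Rightarrow> 'a \<Rightarrow> bool) \<Rightarrow> bool" where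
  "connected_graph V E \<longleftrightarrow> simple_graph V E \<and> V \<noteq> {}
     \<and> (\<forall>u\<in>V. \<forall>w\<in>V. \<exists>p. is_path V E p \<and> hd p = u \<and> last p = w)"

definition detour_vertex :: "'a set \<Rightarrow> ('a \<Rightarrow> 'a \<Rightarrow> bool) \<Rightarrow> 'a \<Rightarrow> nat" where
  "detour_vertex V E v = Max {length p | p. is_path V E p \<and> (hd p = v \<or> last p = v)}"

definition detour_graph :: "'a set \<Rightarrow> ('a \<Rightarrow> 'a \<Rightarrow> bool) \<Rightarrow> nat" where
  "detour_graph V E = Max (detour_vertex V E ` V)"

definition detour_sequence :: "'a set \<Rightarrow> ('a \<Rightarrow> 'a \<Rightarrow> bool) \<Rightarrow> nat list" where
  "detour_sequence V E = sorted_list_of_multiset (image_mset (detour_vertex V E) (mset_set V))"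

end

theory Submission
  imports Defs
begin

lemma is_path_alt: "is_path V E p \<longleftrightarrow> p \<noteq> [] \<and> distinct p \<and> set p \<subseteq> V \<and> successively E p"
  unfolding is_path_def successively_conv_nth by blast

lemma path_len: assumes "finite V" "is_path V E p" shows "length p \<le> card V"
proof -
  have "length p = card (set p)" using assms by (simp add: is_path_def distinct_card)
  also have "\<dots> \<le> card V" using assms by (intro card_mono) (auto simp: is_path_def)
  finally show ?thesis .
qed

lemma fin_lens: assumes "finite V"
  shows "finite {length p | p. is_path V E p \<and> (hd p = v \<or> last p = v)}"
  by (rule finite_subset[of _ "{..card V}"]) (auto dest: path_len[OF assms])

lemma dv_ge: assumes "finite V" "is_path V E p" "hd p = v \<or> last p = v"
  shows "length p \<le> detour_vertex V E v"
  unfolding detour_vertex_def using assms by (intro Max_ge fin_lens) auto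

lemma dv_ex: assumes "finite V" "v \<in> V"
  shows "\<exists>p. is_path V E p \<and> (hd p = v \<or> last p = v) \<and> length p = detour_vertex V E v"
proof -
  have "is_path V E [v]" using assms by (simp add: is_path_def)
  hence ne: "{length p | p. is_path V E p \<and> (hd p = v \<or> last p = v)} \<noteq> {}" by force
  show ?thesis unfolding detour_vertex_def using Max_in[OF fin_lens[OF assms(1)] ne] by auto
qed

lemma path_rev: "is_path V E p \<Longrightarrow> (\<forall>u w. E u w \<longrightarrow> E w u) \<Longrightarrow> is_path V E (rev p)"
  unfolding is_path_alt by (auto elim: successively_mono)

lemma main1:
  assumes sg: "simple_graph V E" and P: "is_path V E P" and q: "is_path V E q"
    and hq: "hd q = v" and lq: "last q \<in> set P"
  shows "\<exists>p. is_path V E p \<and> hd p = v \<and> 2 * length p \<ge> length P + 1"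
proof -
  have sym: "\<forall>u w. E u w \<longrightarrow> E w u" using sg by (simp add: simple_graph_def)
  define a where "a = takeWhile (\<lambda>x. x \<notin> set P) q"
  define r where "r = dropWhile (\<lambda>x. x \<notin> set P) q"
  have qar: "q = a @ r" unfolding a_def r_def by simp
  have rne: "r \<noteq> []"
  proof
    assume "r = []"
    hence "\<forall>x\<in>set q. x \<notin> set P" unfolding r_def by (simp add: dropWhile_eq_Nil_conv)
    moreover have "q \<noteq> []" using q by (simp add: is_path_def)
    ultimately show False using lq by simp
  qed
  define x where "x = hd r"
  have xP: "x \<in> set P" unfolding x_def r_def using rne r_def
    by (metis hd_dropWhile)
  have aP: "set a \<inter> set P = {}" unfolding a_def by (auto dest: set_takeWhileD)
  obtain i where i: "i < length P" "P ! i = x" using xP by (metis in_set_conv_nth)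
  have qs: "successively E q" "distinct q" "set q \<subseteq> V" using q by (auto simp: is_path_alt)
  have sa: "successively E a" and adj: "a = [] \<or> E (last a) x" and da: "distinct a"
    and aV: "set a \<subseteq> V"
    using qs rne unfolding qar x_def by (auto simp: successively_append_iff)
  have Ps: "successively E P" "distinct P" "set P \<subseteq> V" using P by (auto simp: is_path_alt)
  have gen: "is_path V E (a @ b)" if b: "is_path V E b" "hd b = x" "set b \<subseteq> set P" for b
  proof -
    have "b \<noteq> []" "successively E b" "distinct b" "set b \<subseteq> V" using b by (auto simp: is_path_alt)
    thus ?thesis using sa adj da aV b aP unfolding is_path_alt
      by (auto simp: successively_append_iff)
  qed
  have hdv: "hd (a @ b) = v" if "hd b = x" "b \<noteq> []" for b
    using hq that rne unfolding qar x_def by (cases a) auto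
  define b1 where "b1 = drop i P"
  define b2 where "b2 = rev (take (Suc i) P)"
  have b1: "is_path V E b1" "hd b1 = x" "set b1 \<subseteq> set P" "length b1 = length P - i"
    using Ps i unfolding b1_def is_path_alt
    by (auto simp: hd_drop_conv_nth set_drop_subset dest: in_set_dropD successively_append_iff[THEN iffD1, of _ "take i P" "drop i P", simplified])
  have tp: "is_path V E (take (Suc i) P)"
    using Ps i unfolding is_path_alt
    by (auto dest: successively_append_iff[THEN iffD1, of _ "take (Suc i) P" "drop (Suc i) P", simplified] set_take_subset[THEN subsetD])
  have lt: "last (take (Suc i) P) = P ! i" using i(1) by (subst last_conv_nth) (auto simp: min_def intro: arg_cong[where f="(!) P"])
  have b2: "is_path V E b2" "hd b2 = x" "set b2 \<subseteq> set P" "length b2 = Suc i"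
    using i path_rev[OF tp sym] unfolding b2_def
    by (auto simp: hd_rev lt dest: set_take_subset[THEN subsetD] ) 
  have b1n: "b1 \<noteq> []" "b2 \<noteq> []" using b1 b2 by (auto simp: is_path_def)
  show ?thesis
  proof (cases "2 * (length P - i) \<ge> length P + 1")
    case True
    thus ?thesis using gen[OF b1(1-3)] hdv[OF b1(2) b1n(1)] b1(4) by (intro exI[of _ "a @ b1"]) auto
  next
    case False
    thus ?thesis using gen[OF b2(1-3)] hdv[OF b2(2) b1n(2)] b2(4) by (intro exI[of _ "a @ b2"]) auto
  qed
qed

theorem lemma1p4:
  fixes V :: "'a set" and E :: "'a \<Rightarrow> 'a \<Rightarrow> bool" and v :: 'a
  assumes "connected_graph V E" and "v \<in> V"
  shows "\<lceil>(real (detour_graph V E) + 1) / 2\<rceil> \<le> int (detour_vertex V E v)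
         \<and> detour_vertex V E v \<le> detour_graph V E
         \<and> card (set (detour_sequence V E)) \<le> nat \<lceil>real (detour_graph V E) / 2\<rceil>"
proof -
  have sg: "simple_graph V E" and Vne: "V \<noteq> {}"
    and con: "\<forall>u\<in>V. \<forall>w\<in>V. \<exists>p. is_path V E p \<and> hd p = u \<and> last p = w"
    using assms(1) by (auto simp: connected_graph_def)
  have fin: "finite V" using sg by (simp add: simple_graph_def)
  define T where "T = detour_graph V E"
  have le: "detour_vertex V E u \<le> T" if "u \<in> V" for u
    unfolding T_def detour_graph_def using fin that by (intro Max_ge) auto
  have lb: "T + 1 \<le> 2 * detour_vertex V E u" if u: "u \<in> V" for u
  proof -
    have "T \<in> detour_vertex V E ` V"
      unfolding T_def detour_graph_def using fin Vne by (intro Max_in) auto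
    then obtain w where w: "w \<in> V" "T = detour_vertex V E w" by auto
    obtain P where P: "is_path V E P" "length P = T" using dv_ex[OF fin w(1), of E] w(2) by auto
    have hP: "hd P \<in> V" using P by (auto simp: is_path_def)
    obtain q where q: "is_path V E q" "hd q = u" "last q = hd P" using con u hP by blast
    have "last q \<in> set P" using q P by (auto simp: is_path_def)
    then obtain p where p: "is_path V E p" "hd p = u" "2 * length p \<ge> length P + 1"
      using main1[OF sg P(1) q(1,2)] by blast
    have "length p \<le> detour_vertex V E u" using dv_ge[OF fin p(1)] p(2) by auto
    thus ?thesis using p(3) P(2) by linarith
  qed
  have c1: "\<lceil>(real T + 1) / 2\<rceil> \<le> int (detour_vertex V E v)"
    using lb[OF assms(2)] by (simp add: ceiling_le_iff)
  have ss: "set (detour_sequence V E) = detour_vertex V E ` V"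
    unfolding detour_sequence_def using fin by simp
  have sub: "detour_vertex V E ` V \<subseteq> {(T + 1 + 1) div 2 .. T}"
    using lb le by force
  have "card (set (detour_sequence V E)) \<le> card {(T + 1 + 1) div 2 .. T}"
    unfolding ss by (rule card_mono[OF _ sub]) simp
  also have "\<dots> = T + 1 - (T + 2) div 2" by simp
  also have "\<dots> = nat \<lceil>real T / 2\<rceil>"
  proof -
    have "\<lceil>real T / 2\<rceil> = int ((T + 1) div 2)"
    proof (cases "even T")
      case True then obtain k where "T = 2 * k" by blast
      thus ?thesis by simp
    next
      case False then obtain k where k: "T = 2 * k + 1" using oddE by blast
      have "(T + 1) div 2 = k + 1" using k by simp
      moreover have "\<lceil>real T / 2\<rceil> = int k + 1"
        by (rule ceiling_unique) (auto simp: k field_simps)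
      ultimately show ?thesis by simp
    qed
    thus ?thesis by simp
  qed
  finally show ?thesis using c1 le[OF assms(2)] unfolding T_def by simp
qed

end
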